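(* Let $0<\lambda\le\Lambda$ and let $\mathcal P^+$ be Pucci's maximal operator with parameters $\lambda,\Lambda$. Define $\Phi:\mathbb R^d\times\mathbb R\to\mathbb R$ by $\Phi(x,t)=t^{-\frac{d\lambda}{2\Lambda}}e^{-\frac{|x|^2}{4\Lambda t}}$ for $t>0$ and $\Phi(x,t)=0$ for $t\le0$. Then $\Phi(kx,k^2t)=k^{-\frac{d\lambda}{\Lambda}}\Phi(x,t)$ for all $k>0$, and $\Phi$ is a (viscosity) supersolution of $\partial_t\Phi-\mathcal P^+(D^2\Phi)\ge0$ in $\mathbb R^{d+1}\setminus\{(0,0)\}$.
   Context: $\mathcal P^+(M)=\Lambda\,\mathrm{Tr}M_+-\lambda\,\mathrm{Tr}M_-$ for real symmetric $d\times d$ matrices $M$, where $M_\pm\ge0$ are the positive and negative parts of $M$. *)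

theory Defs
  imports "HOL-Analysis.Analysis"
begin

definition symmetric_mat :: "real^'n^'n \<Rightarrow> bool" where
  "symmetric_mat M \<longleftrightarrow> transpose M = M"

definition psd :: "real^'n^'n \<Rightarrow> bool" where
  "psd M \<longleftrightarrow> symmetric_mat M \<and> (\<forall>v. 0 \<le> v \<bullet> (M *v v))"

definition pos_part :: "real^'n^'n \<Rightarrow> real^'n^'n" where
  "pos_part M = (THE P. \<exists>N. psd P \<and> psd N \<and> M = P - N \<and> P ** N = 0)"

definition neg_part :: "real^'n^'n \<Rightarrow> real^'n^'n" where
  "neg_part M = pos_part M - M"

definition pucci_max :: "real \<Rightarrow> real \<Rightarrow> real^'n^'n \<Rightarrow> real" where
  "pucci_max lam Lam M = Lam * trace (pos_part M) - lam * trace (neg_part M)"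

definition Phi :: "real \<Rightarrow> real \<Rightarrow> (real^'n) \<times> real \<Rightarrow> real" where
  "Phi lam Lam = (\<lambda>(x, t). if 0 < t
      then t powr (- (real CARD('n) * lam / (2 * Lam))) * exp (- (norm x)\<^sup>2 / (4 * Lam * t))
      else 0)"

definition lsc_at :: "('a::topological_space \<Rightarrow> real) \<Rightarrow> 'a \<Rightarrow> bool" where
  "lsc_at u y \<longleftrightarrow> (\<forall>c < u y. eventually (\<lambda>z. c < u z) (at y))"

definition C21_test :: "((real^'n) \<times> real \<Rightarrow> real) \<Rightarrow> ((real^'n) \<times> real \<Rightarrow> real^'n)
    \<Rightarrow> ((real^'n) \<times> real \<Rightarrow> real^'n^'n) \<Rightarrow> ((real^'n) \<times> real \<Rightarrow> real)
    \<Rightarrow> ((real^'n) \<times> real) set \<Rightarrow> bool" where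
  "C21_test phi Dx Dxx Dt U \<longleftrightarrow> open U \<and>
     (\<forall>(x, t) \<in> U.
        ((\<lambda>y. phi (y, t)) has_derivative (\<lambda>h. Dx (x, t) \<bullet> h)) (at x) \<and>
        ((\<lambda>y. Dx (y, t)) has_derivative (\<lambda>h. Dxx (x, t) *v h)) (at x) \<and>
        ((\<lambda>s. phi (x, s)) has_real_derivative Dt (x, t)) (at t)) \<and>
     continuous_on U phi \<and> continuous_on U Dx \<and> continuous_on U Dxx \<and> continuous_on U Dt"

definition visc_supersol :: "real \<Rightarrow> real \<Rightarrow> ((real^'n) \<times> real \<Rightarrow> real)
    \<Rightarrow> ((real^'n) \<times> real) set \<Rightarrow> bool" where
  "visc_supersol lam Lam u Omega \<longleftrightarrow>
     (\<forall>z \<in> Omega. lsc_at u z) \<and>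
     (\<forall>z0 \<in> Omega. \<forall>phi Dx Dxx Dt U.
        z0 \<in> U \<and> U \<subseteq> Omega \<and> C21_test phi Dx Dxx Dt U \<and>
        (\<forall>z \<in> U. u z - phi z \<ge> u z0 - phi z0)
        \<longrightarrow> Dt z0 - pucci_max lam Lam (Dxx z0) \<ge> 0)"

end

theory Submission
  imports Defs
begin

lemma mv_inner_transpose: "((A::real^'n^'n) *v x) \<bullet> y = x \<bullet> (transpose A *v y)"
  by (metis dot_lmul_matrix inner_commute transpose_matrix_vector)

lemma symmetric_mat_iff: "symmetric_mat (A::real^'n^'n) \<longleftrightarrow> (\<forall>x y. (A *v x) \<bullet> y = x \<bullet> (A *v y))"
proof
  assume "symmetric_mat A" then show "\<forall>x y. (A *v x) \<bullet> y = x \<bullet> (A *v y)"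
    by (metis mv_inner_transpose symmetric_mat_def)
next
  assume h: "\<forall>x y. (A *v x) \<bullet> y = x \<bullet> (A *v y)"
  have "\<forall>y. transpose A *v y = A *v y"
  proof
    fix y
    have "\<forall>x. x \<bullet> (transpose A *v y - A *v y) = 0"
      using h by (simp add: inner_diff_right mv_inner_transpose)
    then show "transpose A *v y = A *v y" by (metis inner_eq_zero_iff right_minus_eq)
  qed
  then show "symmetric_mat A" unfolding symmetric_mat_def by (simp add: matrix_eq)
qed

lemma sym_inner: "symmetric_mat (A::real^'n^'n) \<Longrightarrow> (A *v x) \<bullet> y = x \<bullet> (A *v y)"
  using symmetric_mat_iff by blast

definition onb :: "(real^'n) set \<Rightarrow> bool" where
  "onb B \<longleftrightarrow> finite B \<and> (\<forall>b\<in>B. b \<bullet> b = 1) \<and> (\<forall>b\<in>B. \<forall>c\<in>B. b \<noteq> c \<longrightarrow> b \<bullet> c = 0)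
     \<and> (\<forall>v. v = (\<Sum>b\<in>B. (b \<bullet> v) *\<^sub>R b))"


lemma onb_fin: "onb B \<Longrightarrow> finite B"
  unfolding onb_def by (elim conjE) assumption

lemma onb_unit: "onb B \<Longrightarrow> b \<in> B \<Longrightarrow> b \<bullet> b = 1"
  unfolding onb_def by (elim conjE) (erule bspec)

lemma onb_inner_sum: "finite B \<Longrightarrow> (\<forall>b\<in>B. b \<bullet> b = 1) \<Longrightarrow> (\<forall>b\<in>B. \<forall>c\<in>B. b \<noteq> c \<longrightarrow> b \<bullet> c = 0)
  \<Longrightarrow> c \<in> B \<Longrightarrow> c \<bullet> (\<Sum>b\<in>B. f b *\<^sub>R b) = f c"
proof -
  assume a: "finite B" "\<forall>b\<in>B. b \<bullet> b = 1" "\<forall>b\<in>B. \<forall>c\<in>B. b \<noteq> c \<longrightarrow> b \<bullet> c = 0" "c \<in> B"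
  have "c \<bullet> (\<Sum>b\<in>B. f b *\<^sub>R b) = (\<Sum>b\<in>B. f b * (c \<bullet> b))"
    by (simp add: inner_sum_right)
  also have "\<dots> = (\<Sum>b\<in>B. if b = c then f c else 0)"
    using a by (intro sum.cong) auto
  also have "\<dots> = f c" using a by simp
  finally show ?thesis .
qed

lemma onb_parseval:
  assumes "onb B" shows "v \<bullet> w = (\<Sum>b\<in>B. (b \<bullet> v) * (b \<bullet> w))"
proof -
  have "v \<bullet> w = (\<Sum>b\<in>B. (b \<bullet> v) *\<^sub>R b) \<bullet> w" using assms unfolding onb_def by metis
  also have "\<dots> = (\<Sum>b\<in>B. (b \<bullet> v) * (b \<bullet> w))" by (simp add: inner_sum_left)
  finally show ?thesis .
qed

lemma onb_card:
  assumes "onb (B::(real^'n) set)" shows "card B = CARD('n)"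
proof -
  have ind: "independent B"
  proof (rule pairwise_orthogonal_independent)
    show "pairwise orthogonal B" using assms unfolding onb_def pairwise_def orthogonal_def by auto
    show "0 \<notin> B" using assms unfolding onb_def by force
  qed
  have "span B = UNIV"
  proof -
    have "v \<in> span B" for v
    proof -
      have "v = (\<Sum>b\<in>B. (b \<bullet> v) *\<^sub>R b)" using assms unfolding onb_def by metis
      moreover have "(\<Sum>b\<in>B. (b \<bullet> v) *\<^sub>R b) \<in> span B"
        by (intro span_sum span_scale span_base)
      ultimately show ?thesis by simp
    qed
    then show ?thesis by auto
  qed
  then have "card B = dim (UNIV::(real^'n) set)" using dim_span_eq_card_independent[OF ind] by simp
  then show ?thesis by simp
qed

lemma trace_axis: "trace (A::real^'n^'n) = (\<Sum>i\<in>UNIV. axis i 1 \<bullet> (A *v axis i 1))"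
proof -
  have "axis i 1 \<bullet> (A *v axis i 1) = A $ i $ i" for i
    by (simp add: inner_axis' matrix_vector_mul_component inner_axis)
  then show ?thesis by (simp add: trace_def)
qed

lemma onb_trace:
  assumes "onb B" shows "trace (A::real^'n^'n) = (\<Sum>b\<in>B. b \<bullet> (A *v b))"
proof -
  have e1: "b \<bullet> (A *v axis i 1) = (transpose A *v b) \<bullet> axis i 1" for b i
    by (metis mv_inner_transpose transpose_transpose)
  have e2: "v \<bullet> axis i 1 = v $ i" for v :: "real^'n" and i
    by (simp add: inner_axis)
  have "trace A = (\<Sum>i\<in>UNIV. axis i 1 \<bullet> (A *v axis i 1))" by (rule trace_axis)
  also have "\<dots> = (\<Sum>i\<in>UNIV. \<Sum>b\<in>B. (b \<bullet> axis i 1) * (b \<bullet> (A *v axis i 1)))"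
    by (intro sum.cong refl onb_parseval[OF assms])
  also have "\<dots> = (\<Sum>i\<in>UNIV. \<Sum>b\<in>B. b $ i * (transpose A *v b) $ i)"
    by (simp only: e1 e2)
  also have "\<dots> = (\<Sum>b\<in>B. \<Sum>i\<in>UNIV. b $ i * (transpose A *v b) $ i)"
    by (rule sum.swap)
  also have "\<dots> = (\<Sum>b\<in>B. b \<bullet> (transpose A *v b))"
    by (simp only: inner_vec_def inner_real_def)
  also have "\<dots> = (\<Sum>b\<in>B. b \<bullet> (A *v b))"
    by (intro sum.cong refl) (metis inner_commute mv_inner_transpose transpose_transpose)
  finally show ?thesis .
qed

lemma quad_expand:
  assumes "symmetric_mat (M::real^'n^'n)"
  shows "(u + s *\<^sub>R w) \<bullet> (M *v (u + s *\<^sub>R w)) = u \<bullet> (M *v u) + 2 * s * (u \<bullet> (M *v w)) + s^2 * (w \<bullet> (M *v w))"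
proof -
  have "w \<bullet> (M *v u) = u \<bullet> (M *v w)" using sym_inner[OF assms, of w u] by (simp add: inner_commute)
  then show ?thesis
    by (simp add: matrix_vector_right_distrib matrix_vector_mult_scaleR inner_add_left inner_add_right power2_eq_square algebra_simps)
qed

lemma quad_le_zero_aux:
  fixes a C :: real
  assumes "\<forall>s. 2 * s * a \<le> s^2 * C" shows "a = 0"
proof (rule ccontr)
  assume "a \<noteq> 0"
  define t where "t = \<bar>C\<bar> + 1"
  define s where "s = a / t"
  have p: "t > 0" by (simp add: t_def)
  have h: "2 * s * a \<le> s^2 * C" using assms by blast
  have e1: "2 * s * a * t^2 = 2 * a^2 * t" using p by (simp add: s_def power2_eq_square field_simps)
  have e2: "s^2 * C * t^2 = a^2 * C" using p by (simp add: s_def power2_eq_square field_simps)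
  have "2 * s * a * t^2 \<le> s^2 * C * t^2" using h by (simp add: mult_right_mono)
  hence "2 * a^2 * t \<le> a^2 * C" using e1 e2 by simp
  moreover have "a^2 > 0" using \<open>a \<noteq> 0\<close> by simp
  moreover have "C < 2 * t" using t_def by simp
  ultimately show False
    using mult_strict_left_mono[of C "2*t" "a^2"] by (simp add: algebra_simps)
qed

lemma spectral_sub:
  fixes M :: "real^'n^'n"
  assumes sym: "symmetric_mat M"
  shows "subspace S \<Longrightarrow> (\<forall>x\<in>S. M *v x \<in> S) \<Longrightarrow>
    \<exists>B. finite B \<and> B \<subseteq> S \<and> (\<forall>b\<in>B. b \<bullet> b = 1) \<and> (\<forall>b\<in>B. \<forall>c\<in>B. b \<noteq> c \<longrightarrow> b \<bullet> c = 0)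
       \<and> (\<forall>b\<in>B. M *v b = (b \<bullet> (M *v b)) *\<^sub>R b) \<and> S \<subseteq> span B"
proof (induction "dim S" arbitrary: S rule: less_induct)
  case less
  show ?case
  proof (cases "S = {0}")
    case True
    then show ?thesis by (intro exI[of _ "{}"]) auto
  next
    case False
    then obtain x where x: "x \<in> S" "x \<noteq> 0" using less.prems(1) subspace_0 by blast
    define K where "K = S \<inter> sphere 0 1"
    have cK: "compact K" unfolding K_def
      using closed_subspace[OF less.prems(1)] compact_sphere by (simp add: closed_Int_compact)
    have neK: "K \<noteq> {}"
    proof -
      have "(1 / norm x) *\<^sub>R x \<in> K" unfolding K_def using x less.prems(1)
        by (simp add: subspace_scale)
      then show ?thesis by blast
    qed
    have coK: "continuous_on K (\<lambda>v. v \<bullet> (M *v v))"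
      by (intro continuous_intros linear_continuous_on matrix_vector_mul_bounded_linear)
    obtain u where u: "u \<in> K" and umax: "\<forall>y\<in>K. y \<bullet> (M *v y) \<le> u \<bullet> (M *v u)"
      using continuous_attains_sup[OF cK neK coK] by blast
    define m where "m = u \<bullet> (M *v u)"
    have uS: "u \<in> S" and un: "norm u = 1" using u unfolding K_def by simp_all
    have uu: "u \<bullet> u = 1" using un by (simp add: norm_eq_1)
    have bound: "v \<bullet> (M *v v) \<le> m * (v \<bullet> v)" if "v \<in> S" for v
    proof (cases "v = 0")
      case True then show ?thesis by simp
    next
      case False
      have "(1 / norm v) *\<^sub>R v \<in> K" unfolding K_def using that less.prems(1) False
        by (simp add: subspace_scale)
      then have "((1 / norm v) *\<^sub>R v) \<bullet> (M *v ((1 / norm v) *\<^sub>R v)) \<le> m"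
        using umax m_def by blast
      then have "(v \<bullet> (M *v v)) / (norm v)^2 \<le> m"
        by (simp add: matrix_vector_mult_scaleR power2_eq_square)
      then show ?thesis using False
        by (simp add: power2_norm_eq_inner[symmetric] divide_le_eq mult.commute)
    qed
    have key: "u \<bullet> (M *v w) = 0" if "w \<in> S" "w \<bullet> u = 0" for w
    proof (rule quad_le_zero_aux[where C = "m * (w \<bullet> w) - w \<bullet> (M *v w)"], intro allI)
      fix s :: real
      have "u + s *\<^sub>R w \<in> S" using uS that less.prems(1) by (simp add: subspace_add subspace_scale)
      then have "(u + s *\<^sub>R w) \<bullet> (M *v (u + s *\<^sub>R w)) \<le> m * ((u + s *\<^sub>R w) \<bullet> (u + s *\<^sub>R w))"
        by (rule bound)
      moreover have "(u + s *\<^sub>R w) \<bullet> (u + s *\<^sub>R w) = 1 + s^2 * (w \<bullet> w)"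
        using uu that(2) by (simp add: inner_add_left inner_add_right inner_commute power2_eq_square)
      ultimately have "m + 2 * s * (u \<bullet> (M *v w)) + s^2 * (w \<bullet> (M *v w)) \<le> m * (1 + s^2 * (w \<bullet> w))"
        using quad_expand[OF sym, of u s w] m_def by simp
      then show "2 * s * (u \<bullet> (M *v w)) \<le> s^2 * (m * (w \<bullet> w) - w \<bullet> (M *v w))"
        by (simp add: algebra_simps)
    qed
    have eig: "M *v u = m *\<^sub>R u"
    proof -
      define r where "r = M *v u - m *\<^sub>R u"
      have rS: "r \<in> S" unfolding r_def using less.prems uS by (simp add: subspace_diff subspace_scale)
      have ru: "r \<bullet> u = 0"
      proof -
        have "r \<bullet> u = (M *v u) \<bullet> u - m * (u \<bullet> u)" by (simp add: r_def inner_diff_left)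
        also have "\<dots> = 0" using uu m_def by (simp add: inner_commute)
        finally show ?thesis .
      qed
      have "r \<bullet> r = r \<bullet> (M *v u)" using ru by (simp add: r_def inner_diff_right)
      also have "\<dots> = u \<bullet> (M *v r)" using sym_inner[OF sym, of r u] by (simp add: inner_commute)
      also have "\<dots> = 0" using key[OF rS ru] .
      finally show ?thesis unfolding r_def by simp
    qed
    define S' where "S' = {y\<in>S. y \<bullet> u = 0}"
    have subS': "subspace S'" unfolding S'_def subspace_def using less.prems(1)
      by (auto simp: subspace_0 subspace_add subspace_scale inner_add_left)
    have invS': "\<forall>y\<in>S'. M *v y \<in> S'"
    proof
      fix y assume y: "y \<in> S'"
      have "(M *v y) \<bullet> u = y \<bullet> (M *v u)" using sym_inner[OF sym] by blast
      also have "\<dots> = 0" using y eig by (simp add: S'_def)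
      finally show "M *v y \<in> S'" using y less.prems(2) by (simp add: S'_def)
    qed
    have "dim S' < dim S"
    proof (rule dim_psubset)
      have "u \<notin> S'" using uu by (simp add: S'_def)
      moreover have "S' \<subseteq> S" by (auto simp: S'_def)
      ultimately have "S' \<subset> S" using uS by blast
      moreover have "span S' = S'" using subS' by (simp add: span_eq_iff)
      moreover have "span S = S" using less.prems(1) by (simp add: span_eq_iff)
      ultimately show "span S' \<subset> span S" by metis
    qed
    then obtain B' where B': "finite B'" "B' \<subseteq> S'" "\<forall>b\<in>B'. b \<bullet> b = 1"
       "\<forall>b\<in>B'. \<forall>c\<in>B'. b \<noteq> c \<longrightarrow> b \<bullet> c = 0" "\<forall>b\<in>B'. M *v b = (b \<bullet> (M *v b)) *\<^sub>R b" "S' \<subseteq> span B'"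
      using less.hyps[OF _ subS' invS'] by blast
    show ?thesis
    proof (intro exI[of _ "insert u B'"] conjI)
      show "finite (insert u B')" using B' by simp
      show "insert u B' \<subseteq> S" using B' uS S'_def by auto
      show "\<forall>b\<in>insert u B'. b \<bullet> b = 1" using B' uu by auto
      show "\<forall>b\<in>insert u B'. \<forall>c\<in>insert u B'. b \<noteq> c \<longrightarrow> b \<bullet> c = 0"
        using B' S'_def by (auto simp: inner_commute)
      show "\<forall>b\<in>insert u B'. M *v b = (b \<bullet> (M *v b)) *\<^sub>R b" using B' eig uu m_def by auto
      show "S \<subseteq> span (insert u B')"
      proof
        fix y assume y: "y \<in> S"
        have "y - (y \<bullet> u) *\<^sub>R u \<in> S'" unfolding S'_def using y uS uu less.prems(1)
          by (simp add: subspace_diff subspace_scale inner_diff_left)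
        then have "y - (y \<bullet> u) *\<^sub>R u \<in> span (insert u B')" using B'(6) span_mono[of B' "insert u B'"] by auto
        moreover have "(y \<bullet> u) *\<^sub>R u \<in> span (insert u B')" by (simp add: span_base span_scale)
        ultimately have "(y - (y \<bullet> u) *\<^sub>R u) + (y \<bullet> u) *\<^sub>R u \<in> span (insert u B')" by (rule span_add)
        then show "y \<in> span (insert u B')" by simp
      qed
    qed
  qed
qed

lemma spectral:
  fixes M :: "real^'n^'n"
  assumes sym: "symmetric_mat M"
  shows "\<exists>B. onb B \<and> (\<forall>b\<in>B. M *v b = (b \<bullet> (M *v b)) *\<^sub>R b)"
proof -
  obtain B where B: "finite B" "(\<forall>b\<in>B. b \<bullet> b = 1)" "(\<forall>b\<in>B. \<forall>c\<in>B. b \<noteq> c \<longrightarrow> b \<bullet> c = 0)"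
       "(\<forall>b\<in>B. M *v b = (b \<bullet> (M *v b)) *\<^sub>R b)" "UNIV \<subseteq> span B"
    using spectral_sub[OF sym, of UNIV] by auto
  have "v = (\<Sum>b\<in>B. (b \<bullet> v) *\<^sub>R b)" for v
  proof -
    define d where "d = v - (\<Sum>b\<in>B. (b \<bullet> v) *\<^sub>R b)"
    have "\<forall>c\<in>B. orthogonal d c"
    proof
      fix c assume c: "c \<in> B"
      have "c \<bullet> d = c \<bullet> v - c \<bullet> (\<Sum>b\<in>B. (b \<bullet> v) *\<^sub>R b)" by (simp add: d_def inner_diff_right)
      also have "\<dots> = 0" using onb_inner_sum[OF B(1-3) c] by (simp add: inner_commute)
      finally show "orthogonal d c" by (simp add: orthogonal_def inner_commute)
    qed
    moreover have "d \<in> span B" using B(5) by auto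
    ultimately have "orthogonal d d" by (metis orthogonal_to_span)
    then show ?thesis by (simp add: d_def orthogonal_def)
  qed
  then show ?thesis using B unfolding onb_def by blast
qed

definition opm :: "(real^'n \<Rightarrow> real) \<Rightarrow> (real^'n) set \<Rightarrow> real^'n^'n" where
  "opm f B = (\<chi> i j. \<Sum>b\<in>B. f b * b$i * b$j)"

lemma opm_mv:
  fixes B :: "(real^'n) set"
  shows "opm f B *v v = (\<Sum>b\<in>B. (f b * (b \<bullet> v)) *\<^sub>R b)"
proof -
  have "(opm f B *v v) $ i = (\<Sum>b\<in>B. (f b * (b \<bullet> v)) *\<^sub>R b) $ i" for i
  proof -
    have "(opm f B *v v) $ i = (\<Sum>j\<in>UNIV. (\<Sum>b\<in>B. f b * b$i * b$j) * v$j)"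
      by (simp add: opm_def matrix_vector_mult_def)
    also have "\<dots> = (\<Sum>j\<in>UNIV. \<Sum>b\<in>B. f b * b$i * (b$j * v$j))"
      by (simp add: sum_distrib_right mult.assoc)
    also have "\<dots> = (\<Sum>b\<in>B. \<Sum>j\<in>UNIV. f b * b$i * (b$j * v$j))"
      by (rule sum.swap)
    also have "\<dots> = (\<Sum>b\<in>B. f b * b$i * (b \<bullet> v))"
      by (simp add: inner_vec_def sum_distrib_left)
    also have "\<dots> = (\<Sum>b\<in>B. (f b * (b \<bullet> v)) *\<^sub>R b) $ i"
      by (simp add: sum_component mult.commute mult.left_commute)
    finally show ?thesis .
  qed
  then show ?thesis by (simp add: vec_eq_iff)
qed

lemma opm_on_basis:
  assumes "onb B" "c \<in> B" shows "opm f B *v c = f c *\<^sub>R c"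
proof -
  have "opm f B *v c = (\<Sum>b\<in>B. (if b = c then f c else 0) *\<^sub>R b)"
    unfolding opm_mv
  proof (intro sum.cong refl)
    fix b assume "b \<in> B"
    then show "(f b * (b \<bullet> c)) *\<^sub>R b = (if b = c then f c else 0) *\<^sub>R b"
      using assms unfolding onb_def by auto
  qed
  also have "\<dots> = f c *\<^sub>R c" using assms unfolding onb_def
    by (simp add: if_distrib[of "\<lambda>x. x *\<^sub>R _"] sum.delta' cong: if_cong)
  finally show ?thesis .
qed

lemma onb_inner_sum': "onb B \<Longrightarrow> c \<in> B \<Longrightarrow> c \<bullet> (\<Sum>b\<in>B. f b *\<^sub>R b) = f c"
  using onb_inner_sum unfolding onb_def by blast

lemma inner_sum_basis: "onb B \<Longrightarrow> v \<bullet> (\<Sum>b\<in>B. f b *\<^sub>R b) = (\<Sum>b\<in>B. f b * (b \<bullet> v))"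
  by (simp add: inner_sum_right inner_commute)

lemma opm_quad: "onb B \<Longrightarrow> x \<bullet> (opm f B *v y) = (\<Sum>b\<in>B. f b * (b \<bullet> x) * (b \<bullet> y))"
  unfolding opm_mv by (simp add: inner_sum_right inner_commute mult_ac)

lemma opm_sym: "onb B \<Longrightarrow> symmetric_mat (opm f B)"
  unfolding symmetric_mat_iff
proof (intro allI)
  fix x y assume "onb B"
  have "(opm f B *v x) \<bullet> y = y \<bullet> (opm f B *v x)" by (simp add: inner_commute)
  also have "\<dots> = x \<bullet> (opm f B *v y)" using opm_quad[OF \<open>onb B\<close>] by (simp add: mult_ac)
  finally show "(opm f B *v x) \<bullet> y = x \<bullet> (opm f B *v y)" .
qed

lemma opm_psd: "onb B \<Longrightarrow> (\<forall>b\<in>B. 0 \<le> f b) \<Longrightarrow> psd (opm f B)"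
  unfolding psd_def
proof (intro conjI allI)
  assume "onb B" "\<forall>b\<in>B. 0 \<le> f b"
  show "symmetric_mat (opm f B)" using opm_sym[OF \<open>onb B\<close>] .
  fix v
  show "0 \<le> v \<bullet> (opm f B *v v)" unfolding opm_quad[OF \<open>onb B\<close>]
    using \<open>\<forall>b\<in>B. 0 \<le> f b\<close> by (intro sum_nonneg) (simp add: mult.assoc)
qed

lemma opm_diff: "opm f B - opm g B = opm (\<lambda>b. f b - g b) B"
  by (simp add: opm_def vec_eq_iff sum_subtractf left_diff_distrib)

lemma opm_trace: "onb B \<Longrightarrow> trace (opm f B) = (\<Sum>b\<in>B. f b)"
proof -
  assume o: "onb B"
  have "trace (opm f B) = (\<Sum>b\<in>B. b \<bullet> (opm f B *v b))" by (rule onb_trace[OF o])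
  also have "\<dots> = (\<Sum>b\<in>B. f b)"
  proof (rule sum.cong[OF refl])
    fix b assume b: "b \<in> B"
    have "b \<bullet> b = 1" using o b unfolding onb_def by blast
    then show "b \<bullet> (opm f B *v b) = f b" using opm_on_basis[OF o b] by simp
  qed
  finally show ?thesis .
qed

lemma eq_opm:
  assumes "onb B" "\<forall>b\<in>B. (A::real^'n^'n) *v b = f b *\<^sub>R b"
  shows "A = opm f B"
proof -
  have "A *v v = opm f B *v v" for v
  proof -
    have "A *v v = A *v (\<Sum>b\<in>B. (b \<bullet> v) *\<^sub>R b)" using assms(1) unfolding onb_def by metis
    also have "\<dots> = (\<Sum>b\<in>B. (b \<bullet> v) *\<^sub>R (A *v b))"
      by (simp add: linear_sum[OF matrix_vector_mul_linear] matrix_vector_mult_scaleR)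
    also have "\<dots> = (\<Sum>b\<in>B. (f b * (b \<bullet> v)) *\<^sub>R b)"
      using assms(2) by (intro sum.cong refl) (simp add: mult.commute)
    finally show ?thesis by (simp add: opm_mv)
  qed
  then show ?thesis by (simp add: matrix_eq)
qed

lemma opm_zero: "opm (\<lambda>b. 0) B = 0"
  by (simp add: opm_def vec_eq_iff)

lemma unique_part:
  assumes o: "onb B" and eig: "\<forall>b\<in>B. (M::real^'n^'n) *v b = \<mu> b *\<^sub>R b"
    and P: "psd P" and N: "psd N" and MPN: "M = P - N" and PN: "P ** N = 0"
  shows "P = opm (\<lambda>b. max (\<mu> b) 0) B"
proof (rule eq_opm[OF o], intro ballI)
  fix b assume b: "b \<in> B"
  define p where "p = P *v b"
  define n where "n = N *v b"
  have pn: "p - n = \<mu> b *\<^sub>R b" using eig b MPN by (simp add: p_def n_def matrix_vector_mult_diff_rdistrib)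
  have symP: "symmetric_mat P" using P psd_def by blast
  have pn0: "p \<bullet> n = 0"
  proof -
    have "p \<bullet> n = b \<bullet> (P *v (N *v b))" using sym_inner[OF symP] by (simp add: p_def n_def)
    also have "\<dots> = 0" by (simp add: matrix_vector_mul_assoc PN)
    finally show ?thesis .
  qed
  have pb: "p \<bullet> b \<ge> 0" using P unfolding psd_def p_def by (simp add: inner_commute)
  have nb: "n \<bullet> b \<ge> 0" using N unfolding psd_def n_def by (simp add: inner_commute)
  have pp: "p \<bullet> p = \<mu> b * (p \<bullet> b)"
  proof -
    have "p = \<mu> b *\<^sub>R b + n" using pn by (simp add: algebra_simps)
    then have "p \<bullet> p = p \<bullet> (\<mu> b *\<^sub>R b + n)" by simp
    also have "\<dots> = \<mu> b * (p \<bullet> b)" using pn0 by (simp add: inner_add_right)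
    finally show ?thesis .
  qed
  have nn: "n \<bullet> n = - \<mu> b * (n \<bullet> b)"
  proof -
    have "n = p - \<mu> b *\<^sub>R b" using pn by (simp add: algebra_simps)
    then have "n \<bullet> n = n \<bullet> (p - \<mu> b *\<^sub>R b)" by simp
    also have "\<dots> = - \<mu> b * (n \<bullet> b)" using pn0 by (simp add: inner_diff_right inner_commute)
    finally show ?thesis .
  qed
  show "P *v b = max (\<mu> b) 0 *\<^sub>R b"
  proof (cases "\<mu> b > 0")
    case True
    then have "n \<bullet> n \<le> 0" using nn nb by (simp add: mult_nonneg_nonneg)
    then have "n = 0" by (meson inner_eq_zero_iff inner_ge_zero order_antisym)
    then show ?thesis using pn True by (simp add: p_def)
  next
    case False
    then have "p \<bullet> p \<le> 0" using pp pb by (simp add: mult_nonpos_nonneg)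
    then have "p = 0" by (meson inner_eq_zero_iff inner_ge_zero order_antisym)
    then show ?thesis using False by (simp add: p_def max_def)
  qed
qed

lemma parts_spec:
  assumes o: "onb B" and eig: "\<forall>b\<in>B. (M::real^'n^'n) *v b = \<mu> b *\<^sub>R b"
  shows "pos_part M = opm (\<lambda>b. max (\<mu> b) 0) B \<and> neg_part M = opm (\<lambda>b. max (- \<mu> b) 0) B"
proof -
  define P0 where "P0 = opm (\<lambda>b. max (\<mu> b) 0) B"
  define N0 where "N0 = opm (\<lambda>b. max (- \<mu> b) 0) B"
  have M: "M = opm \<mu> B" by (rule eq_opm[OF o eig])
  have MPN: "M = P0 - N0" unfolding M P0_def N0_def opm_diff
    by (rule arg_cong[where f="\<lambda>f. opm f B"]) (auto simp: max_def)
  have psdP: "psd P0" unfolding P0_def by (rule opm_psd[OF o]) simp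
  have psdN: "psd N0" unfolding N0_def by (rule opm_psd[OF o]) simp
  have PN: "P0 ** N0 = 0"
  proof -
    have "P0 ** N0 = opm (\<lambda>b. 0) B"
    proof (rule eq_opm[OF o], intro ballI)
      fix b assume b: "b \<in> B"
      have "(P0 ** N0) *v b = P0 *v (N0 *v b)" by (simp add: matrix_vector_mul_assoc)
      also have "\<dots> = (max (- \<mu> b) 0 * max (\<mu> b) 0) *\<^sub>R b"
        unfolding N0_def P0_def using opm_on_basis[OF o b] by (simp add: matrix_vector_mult_scaleR)
      also have "\<dots> = 0 *\<^sub>R b" by (simp add: max_def)
      finally show "(P0 ** N0) *v b = 0 *\<^sub>R b" .
    qed
    then show ?thesis by (simp add: opm_zero)
  qed
  have pos: "pos_part M = P0"
    unfolding pos_part_def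
  proof (rule the_equality)
    show "\<exists>N. psd P0 \<and> psd N \<and> M = P0 - N \<and> P0 ** N = 0" using psdP psdN MPN PN by blast
    fix P assume "\<exists>N. psd P \<and> psd N \<and> M = P - N \<and> P ** N = 0"
    then obtain N where "psd P" "psd N" "M = P - N" "P ** N = 0" by blast
    then show "P = P0" unfolding P0_def using unique_part[OF o eig] by blast
  qed
  moreover have "neg_part M = N0" unfolding neg_part_def pos by (simp add: MPN)
  ultimately show ?thesis unfolding P0_def N0_def by blast
qed

lemma pucci_aux:
  fixes lam Lam \<alpha> \<beta> x m :: real
  assumes lam: "0 < lam" "lam \<le> Lam" and ab: "0 \<le> \<alpha>" "0 \<le> \<beta>" and x0: "0 \<le> x" and mu: "m \<le> \<alpha> * x - \<beta>"
  shows "Lam * max m 0 - lam * max (- m) 0 \<le> Lam * \<alpha> * x - lam * \<beta>"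
proof (cases "m \<ge> 0")
  case True
  have "Lam * m \<le> Lam * (\<alpha> * x - \<beta>)" using mu lam by (simp add: mult_left_mono)
  moreover have "lam * \<beta> \<le> Lam * \<beta>" using lam ab by (simp add: mult_right_mono)
  ultimately show ?thesis using True by (simp add: max_def algebra_simps)
next
  case False
  have ax: "\<alpha> * x \<ge> 0" using ab x0 by simp
  have "lam * m \<le> lam * (\<alpha> * x - \<beta>)" using mu lam by (simp add: mult_left_mono)
  moreover have "lam * (\<alpha> * x) \<le> Lam * (\<alpha> * x)" using lam ax by (simp add: mult_right_mono)
  ultimately show ?thesis using False by (simp add: max_def algebra_simps)
qed
lemma pucci_bound:
  fixes M :: "real^'n^'n"
  assumes sym: "symmetric_mat M" and lam: "0 < lam" "lam \<le> Lam" and ab: "0 \<le> \<alpha>" "0 \<le> \<beta>"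
    and bnd: "\<forall>v. v \<bullet> (M *v v) \<le> \<alpha> * (q \<bullet> v)^2 - \<beta> * (v \<bullet> v)"
  shows "pucci_max lam Lam M \<le> Lam * \<alpha> * (q \<bullet> q) - lam * \<beta> * real CARD('n)"
proof -
  obtain B where o: "onb B" and eig0: "\<forall>b\<in>B. M *v b = (b \<bullet> (M *v b)) *\<^sub>R b"
    using spectral[OF sym] by blast
  define \<mu> where "\<mu> b = b \<bullet> (M *v b)" for b
  have eig: "\<forall>b\<in>B. M *v b = \<mu> b *\<^sub>R b" unfolding \<mu>_def by (rule eig0)
  have fin: "finite B" using o by (rule onb_fin)
  have ps: "pos_part M = opm (\<lambda>b. max (\<mu> b) 0) B" and ns: "neg_part M = opm (\<lambda>b. max (- \<mu> b) 0) B"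
    using parts_spec[OF o eig] by blast+
  have "pucci_max lam Lam M = Lam * (\<Sum>b\<in>B. max (\<mu> b) 0) - lam * (\<Sum>b\<in>B. max (- \<mu> b) 0)"
    unfolding pucci_max_def ps ns opm_trace[OF o] by (rule refl)
  also have "\<dots> = (\<Sum>b\<in>B. Lam * max (\<mu> b) 0 - lam * max (- \<mu> b) 0)"
    by (simp only: sum_subtractf sum_distrib_left)
  finally have pm: "pucci_max lam Lam M = (\<Sum>b\<in>B. Lam * max (\<mu> b) 0 - lam * max (- \<mu> b) 0)" .
  have "pucci_max lam Lam M = (\<Sum>b\<in>B. Lam * max (\<mu> b) 0 - lam * max (- \<mu> b) 0)" by (rule pm)
  also have "\<dots> \<le> (\<Sum>b\<in>B. Lam * \<alpha> * ((q \<bullet> b) * (q \<bullet> b)) - lam * \<beta>)"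
  proof (rule sum_mono)
    fix b assume b: "b \<in> B"
    have bb: "b \<bullet> b = 1" using o b by (rule onb_unit)
    have "\<mu> b \<le> \<alpha> * (q \<bullet> b)^2 - \<beta> * (b \<bullet> b)" unfolding \<mu>_def by (rule bnd[rule_format])
    then have mu: "\<mu> b \<le> \<alpha> * ((q \<bullet> b) * (q \<bullet> b)) - \<beta>" by (simp only: bb power2_eq_square mult_1_right)
    show "Lam * max (\<mu> b) 0 - lam * max (- \<mu> b) 0 \<le> Lam * \<alpha> * ((q \<bullet> b) * (q \<bullet> b)) - lam * \<beta>"
      by (rule pucci_aux[OF lam ab _ mu]) simp
  qed
  also have "\<dots> = Lam * \<alpha> * (\<Sum>b\<in>B. (q \<bullet> b) * (q \<bullet> b)) - lam * \<beta> * real (card B)"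
    by (simp only: sum_subtractf sum_distrib_left sum_constant) (simp add: mult.commute)
  finally have fin: "pucci_max lam Lam M \<le> Lam * \<alpha> * (\<Sum>b\<in>B. (q \<bullet> b) * (q \<bullet> b)) - lam * \<beta> * real (card B)" .
  have "q \<bullet> q = (\<Sum>b\<in>B. (b \<bullet> q) * (b \<bullet> q))" by (rule onb_parseval[OF o])
  also have "\<dots> = (\<Sum>b\<in>B. (q \<bullet> b) * (q \<bullet> b))"
    by (intro sum.cong refl) (metis inner_commute)
  finally have e1: "(\<Sum>b\<in>B. (q \<bullet> b) * (q \<bullet> b)) = q \<bullet> q" by (rule HOL.sym)
  have e2: "card B = CARD('n)" using onb_card[OF o] .
  show ?thesis using fin unfolding e1 e2 .
qed

lemma C21_D:
  assumes "C21_test phi Dx Dxx Dt U" "(x, t) \<in> U"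
  shows "((\<lambda>y. phi (y, t)) has_derivative (\<lambda>h. Dx (x, t) \<bullet> h)) (at x)"
    and "((\<lambda>y. Dx (y, t)) has_derivative (\<lambda>h. Dxx (x, t) *v h)) (at x)"
    and "((\<lambda>s. phi (x, s)) has_real_derivative Dt (x, t)) (at t)"
  using assms unfolding C21_test_def by auto

lemma line_deriv_phi:
  assumes C: "C21_test phi Dx Dxx Dt U" and inU: "(a + s *\<^sub>R u, t) \<in> U"
  shows "((\<lambda>r. phi (a + r *\<^sub>R u, t)) has_real_derivative (Dx (a + s *\<^sub>R u, t) \<bullet> u)) (at s)"
proof -
  have d: "((\<lambda>y. phi (y, t)) has_derivative (\<lambda>h. Dx (a + s *\<^sub>R u, t) \<bullet> h)) (at (a + s *\<^sub>R u))"
    by (rule C21_D(1)[OF C inU])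
  have l: "((\<lambda>r. a + r *\<^sub>R u) has_derivative (\<lambda>h. h *\<^sub>R u)) (at s)"
    by (auto intro!: derivative_eq_intros)
  have "((\<lambda>r. phi (a + r *\<^sub>R u, t)) has_derivative (\<lambda>h. Dx (a + s *\<^sub>R u, t) \<bullet> (h *\<^sub>R u))) (at s)"
    using has_derivative_compose[OF l d] by simp
  moreover have "(\<lambda>h. Dx (a + s *\<^sub>R u, t) \<bullet> (h *\<^sub>R u)) = (*) (Dx (a + s *\<^sub>R u, t) \<bullet> u)"
    by (rule ext) simp
  ultimately show ?thesis unfolding has_field_derivative_def by simp
qed

lemma line_deriv_Dx:
  assumes C: "C21_test phi Dx Dxx Dt U" and inU: "(a + s *\<^sub>R u, t) \<in> U"
  shows "((\<lambda>r. Dx (a + r *\<^sub>R u, t) \<bullet> w) has_real_derivative ((Dxx (a + s *\<^sub>R u, t) *v u) \<bullet> w)) (at s)"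
proof -
  have d: "((\<lambda>y. Dx (y, t)) has_derivative (\<lambda>h. Dxx (a + s *\<^sub>R u, t) *v h)) (at (a + s *\<^sub>R u))"
    by (rule C21_D(2)[OF C inU])
  have l: "((\<lambda>r. a + r *\<^sub>R u) has_derivative (\<lambda>h. h *\<^sub>R u)) (at s)"
    by (auto intro!: derivative_eq_intros)
  have "((\<lambda>r. Dx (a + r *\<^sub>R u, t)) has_derivative (\<lambda>h. Dxx (a + s *\<^sub>R u, t) *v (h *\<^sub>R u))) (at s)"
    using has_derivative_compose[OF l d] by simp
  then have "((\<lambda>r. Dx (a + r *\<^sub>R u, t) \<bullet> w) has_derivative (\<lambda>h. (Dxx (a + s *\<^sub>R u, t) *v (h *\<^sub>R u)) \<bullet> w)) (at s)"
    by (rule has_derivative_inner_left)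
  moreover have "(\<lambda>h. (Dxx (a + s *\<^sub>R u, t) *v (h *\<^sub>R u)) \<bullet> w) = (*) ((Dxx (a + s *\<^sub>R u, t) *v u) \<bullet> w)"
    by (rule ext) (simp add: matrix_vector_mult_scaleR)
  ultimately show ?thesis unfolding has_field_derivative_def by simp
qed

lemma second_order_min:
  fixes g g' :: "real \<Rightarrow> real"
  assumes d: "0 < d" and dg: "\<And>r. \<bar>r\<bar> < d \<Longrightarrow> (g has_real_derivative g' r) (at r)"
    and dg': "(g' has_real_derivative c) (at 0)" and mn: "\<And>r. \<bar>r\<bar> < d \<Longrightarrow> g 0 \<le> g r"
  shows "0 \<le> c"
proof (rule ccontr)
  assume "\<not> 0 \<le> c"
  then have c: "c < 0" by simp
  have g0: "g' 0 = 0"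
    by (rule DERIV_local_min[OF dg[of 0] d]) (use d mn in auto)
  have "((\<lambda>y. (g' y - g' 0) / (y - 0)) \<longlongrightarrow> c) (at 0)"
    using dg' by (simp add: has_field_derivative_iff)
  then have "((\<lambda>y. g' y / y) \<longlongrightarrow> c) (at_right 0)"
    using g0 by (simp add: filterlim_at_split)
  then have "eventually (\<lambda>y. g' y / y < 0) (at_right 0)"
    using c by (rule order_tendstoD(2))
  moreover have "eventually (\<lambda>y. y \<in> {0<..<d}) (at_right (0::real))"
    using d by (rule eventually_at_right_real)
  ultimately have "eventually (\<lambda>y. g' y / y < 0 \<and> y \<in> {0<..<d}) (at_right (0::real))"
    by (rule eventually_conj)
  then obtain e where e: "0 < e" "\<And>y. 0 < y \<Longrightarrow> y < e \<Longrightarrow> g' y / y < 0 \<and> y \<in> {0<..<d}"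
    unfolding eventually_at_right_field by auto
  define r where "r = e / 2"
  have r: "0 < r" "r < e" using e by (auto simp: r_def)
  have rd: "r < d" using e(2)[of r] r by auto
  obtain z where z: "0 < z" "z < r" "g r - g 0 = (r - 0) * g' z"
    using MVT2[of 0 r g g'] r dg rd by force
  have "g' z / z < 0" using e(2)[of z] z r by auto
  then have "g' z < 0" using z by (simp add: divide_less_0_iff)
  then have "r * g' z < 0" using r(1) by (simp add: mult_pos_neg)
  then have "g r < g 0" using z(3) by simp
  moreover have "g 0 \<le> g r" using mn r rd by auto
  ultimately show False by simp
qed

lemma deriv_left_nonneg:
  fixes f :: "real \<Rightarrow> real"
  assumes df: "(f has_real_derivative D) (at t)" and d: "0 < d"
    and le: "\<And>s. t - d < s \<Longrightarrow> s < t \<Longrightarrow> f s \<le> f t"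
  shows "0 \<le> D"
proof -
  have "((\<lambda>y. (f y - f t) / (y - t)) \<longlongrightarrow> D) (at t)"
    using df by (simp add: has_field_derivative_iff)
  then have lim: "((\<lambda>y. (f y - f t) / (y - t)) \<longlongrightarrow> D) (at_left t)"
    by (simp add: filterlim_at_split)
  have "eventually (\<lambda>y. y \<in> {t - d<..<t}) (at_left t)"
    using d by (intro eventually_at_left_real) simp
  then have "eventually (\<lambda>y. 0 \<le> (f y - f t) / (y - t)) (at_left t)"
  proof (rule eventually_mono)
    fix y assume "y \<in> {t - d<..<t}"
    then have "f y - f t \<le> 0" "y - t < 0" using le by auto
    then show "0 \<le> (f y - f t) / (y - t)" by (simp add: divide_nonpos_neg)
  qed
  then show ?thesis using lim by (intro tendsto_lowerbound) auto
qed

lemma mixed_mvt: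
  assumes C: "C21_test phi Dx Dxx Dt U" and h: "0 < h"
    and inU: "\<And>\<xi> r. 0 \<le> \<xi> \<Longrightarrow> \<xi> \<le> h \<Longrightarrow> 0 \<le> r \<Longrightarrow> r \<le> h \<Longrightarrow> (x0 + \<xi> *\<^sub>R u + r *\<^sub>R w, t0) \<in> U"
  shows "\<exists>\<xi> r. 0 < \<xi> \<and> \<xi> < h \<and> 0 < r \<and> r < h \<and>
     phi (x0 + h *\<^sub>R u + h *\<^sub>R w, t0) - phi (x0 + h *\<^sub>R u, t0) - phi (x0 + h *\<^sub>R w, t0) + phi (x0, t0)
       = h * h * ((Dxx (x0 + \<xi> *\<^sub>R u + r *\<^sub>R w, t0) *v w) \<bullet> u)"
proof -
  define g where "g s = phi ((x0 + h *\<^sub>R w) + s *\<^sub>R u, t0) - phi (x0 + s *\<^sub>R u, t0)" for s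
  define g' where "g' s = Dx ((x0 + h *\<^sub>R w) + s *\<^sub>R u, t0) \<bullet> u - Dx (x0 + s *\<^sub>R u, t0) \<bullet> u" for s
  have dg: "(g has_real_derivative g' s) (at s)" if "0 \<le> s" "s \<le> h" for s
  proof -
    have i1: "((x0 + h *\<^sub>R w) + s *\<^sub>R u, t0) \<in> U"
      using inU[of s h] that h by (simp add: algebra_simps)
    have i2: "(x0 + s *\<^sub>R u, t0) \<in> U"
      using inU[of s 0] that h by simp
    show ?thesis unfolding g_def g'_def
      by (intro DERIV_diff line_deriv_phi[OF C i1] line_deriv_phi[OF C i2])
  qed
  obtain \<xi> where xi: "0 < \<xi>" "\<xi> < h" "g h - g 0 = (h - 0) * g' \<xi>"
    using MVT2[of 0 h g g'] h dg by force
  define k where "k r = Dx ((x0 + \<xi> *\<^sub>R u) + r *\<^sub>R w, t0) \<bullet> u" for r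
  define k' where "k' r = (Dxx ((x0 + \<xi> *\<^sub>R u) + r *\<^sub>R w, t0) *v w) \<bullet> u" for r
  have dk: "(k has_real_derivative k' r) (at r)" if "0 \<le> r" "r \<le> h" for r
  proof -
    have i1: "((x0 + \<xi> *\<^sub>R u) + r *\<^sub>R w, t0) \<in> U"
      using inU[of \<xi> r] that xi by simp
    show ?thesis unfolding k_def k'_def by (rule line_deriv_Dx[OF C i1])
  qed
  obtain \<eta> where eta: "0 < \<eta>" "\<eta> < h" "k h - k 0 = (h - 0) * k' \<eta>"
    using MVT2[of 0 h k k'] h dk by force
  have "g' \<xi> = k h - k 0" unfolding g'_def k_def by (simp add: algebra_simps)
  then have "g h - g 0 = h * h * k' \<eta>" using xi(3) eta(3) by simp
  moreover have "g h - g 0 = phi (x0 + h *\<^sub>R u + h *\<^sub>R w, t0) - phi (x0 + h *\<^sub>R u, t0) - phi (x0 + h *\<^sub>R w, t0) + phi (x0, t0)"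
    unfolding g_def by (simp add: algebra_simps)
  ultimately show ?thesis using xi eta unfolding k'_def by (intro exI[of _ \<xi>] exI[of _ \<eta>]) auto
qed

lemma schwarz:
  assumes C: "C21_test phi Dx Dxx Dt U" and z0: "(x0, t0) \<in> U"
  shows "symmetric_mat (Dxx (x0, t0))"
  unfolding symmetric_mat_iff
proof (intro allI)
  fix u w :: "real^'a"
  have oU: "open U" using C unfolding C21_test_def by blast
  obtain \<epsilon> where eps: "0 < \<epsilon>" "ball (x0, t0) \<epsilon> \<subseteq> U" using oU z0 open_contains_ball by blast
  have inU: "(y, t0) \<in> U" if "dist y x0 < \<epsilon>" for y
  proof -
    have "dist (x0, t0) (y, t0) < \<epsilon>" using that by (simp add: dist_Pair_Pair dist_commute)
    then show ?thesis using eps(2) by auto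
  qed
  have cDxx: "isCont Dxx (x0, t0)"
    using C oU z0 unfolding C21_test_def continuous_on_eq_continuous_at[OF oU] by blast
  have cpair: "isCont (\<lambda>y. (y, t0)) x0" by (intro continuous_intros)
  have cD: "isCont (\<lambda>y. Dxx (y, t0)) x0"
    using continuous_at_compose[OF cpair, of Dxx] cDxx by (simp add: o_def)
  define V where "V y = (Dxx (y, t0) *v w) \<bullet> u" for y
  define V' where "V' y = (Dxx (y, t0) *v u) \<bullet> w" for y
  have cV: "isCont V x0" unfolding V_def matrix_vector_mult_def inner_vec_def
    by (simp, intro continuous_intros isCont_vec_nth cD)
  have cV': "isCont V' x0" unfolding V'_def matrix_vector_mult_def inner_vec_def
    by (simp, intro continuous_intros isCont_vec_nth cD)
  have "V' x0 = V x0"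
  proof (rule ccontr)
    assume ne: "V' x0 \<noteq> V x0"
    define e where "e = \<bar>V x0 - V' x0\<bar> / 2"
    have e: "0 < e" using ne by (simp add: e_def)
    obtain d1 where d1: "0 < d1" "\<And>y. dist y x0 < d1 \<Longrightarrow> dist (V y) (V x0) < e"
      using cV e unfolding continuous_at_eps_delta by blast
    obtain d2 where d2: "0 < d2" "\<And>y. dist y x0 < d2 \<Longrightarrow> dist (V' y) (V' x0) < e"
      using cV' e unfolding continuous_at_eps_delta by blast
    define R where "R = norm u + norm w + 1"
    have R: "R > 0" "norm u \<le> R" "norm w \<le> R"
      unfolding R_def using norm_ge_zero[of u] norm_ge_zero[of w] by linarith+
    define m where "m = min \<epsilon> (min d1 d2)"
    have m: "0 < m" "m \<le> \<epsilon>" "m \<le> d1" "m \<le> d2" using eps d1 d2 by (auto simp: m_def)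
    define h where "h = m / (4 * R)"
    have h: "0 < h" using m R by (simp add: h_def)
    have close: "dist (x0 + \<xi> *\<^sub>R a + r *\<^sub>R b) x0 < m"
      if "0 \<le> \<xi>" "\<xi> \<le> h" "0 \<le> r" "r \<le> h" "norm a \<le> R" "norm b \<le> R" for \<xi> r a b
    proof -
      have "dist (x0 + \<xi> *\<^sub>R a + r *\<^sub>R b) x0 = norm (\<xi> *\<^sub>R a + r *\<^sub>R b)"
        by (simp add: dist_norm)
      also have "\<dots> \<le> norm (\<xi> *\<^sub>R a) + norm (r *\<^sub>R b)" by (rule norm_triangle_ineq)
      also have "\<dots> = \<xi> * norm a + r * norm b" using that by simp
      also have "\<dots> \<le> h * R + h * R"
        using that by (intro add_mono mult_mono) auto
      also have "\<dots> < m" using m R by (simp add: h_def)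
      finally show ?thesis .
    qed
    have inU2: "(x0 + \<xi> *\<^sub>R a + r *\<^sub>R b, t0) \<in> U"
      if "0 \<le> \<xi>" "\<xi> \<le> h" "0 \<le> r" "r \<le> h" "norm a \<le> R" "norm b \<le> R" for \<xi> r a b
      using close[OF that] m inU by auto
    obtain \<xi>1 r1 where p1: "0 < \<xi>1" "\<xi>1 < h" "0 < r1" "r1 < h"
      "phi (x0 + h *\<^sub>R u + h *\<^sub>R w, t0) - phi (x0 + h *\<^sub>R u, t0) - phi (x0 + h *\<^sub>R w, t0) + phi (x0, t0)
       = h * h * V (x0 + \<xi>1 *\<^sub>R u + r1 *\<^sub>R w)"
      using mixed_mvt[OF C h, of x0 u w t0] inU2 R unfolding V_def by blast
    obtain \<xi>2 r2 where p2: "0 < \<xi>2" "\<xi>2 < h" "0 < r2" "r2 < h"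
      "phi (x0 + h *\<^sub>R w + h *\<^sub>R u, t0) - phi (x0 + h *\<^sub>R w, t0) - phi (x0 + h *\<^sub>R u, t0) + phi (x0, t0)
       = h * h * V' (x0 + \<xi>2 *\<^sub>R w + r2 *\<^sub>R u)"
      using mixed_mvt[OF C h, of x0 w u t0] inU2 R unfolding V'_def by blast
    have eqpt: "x0 + h *\<^sub>R w + h *\<^sub>R u = x0 + h *\<^sub>R u + h *\<^sub>R w" by (simp add: algebra_simps)
    have "h * h * V (x0 + \<xi>1 *\<^sub>R u + r1 *\<^sub>R w) = h * h * V' (x0 + \<xi>2 *\<^sub>R w + r2 *\<^sub>R u)"
      using p1(5) p2(5)[unfolded eqpt] by linarith
    then have eqV: "V (x0 + \<xi>1 *\<^sub>R u + r1 *\<^sub>R w) = V' (x0 + \<xi>2 *\<^sub>R w + r2 *\<^sub>R u)"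
      using h by simp
    have "dist (V (x0 + \<xi>1 *\<^sub>R u + r1 *\<^sub>R w)) (V x0) < e"
      using d1(2) close[of \<xi>1 r1 u w] p1 R m by auto
    moreover have "dist (V' (x0 + \<xi>2 *\<^sub>R w + r2 *\<^sub>R u)) (V' x0) < e"
      using d2(2) close[of \<xi>2 r2 w u] p2 R m by auto
    ultimately have "\<bar>V x0 - V' x0\<bar> < 2 * e" using eqV by (simp add: dist_real_def)
    then show False by (simp add: e_def)
  qed
  then show "(Dxx (x0, t0) *v u) \<bullet> w = u \<bullet> (Dxx (x0, t0) *v w)"
    by (simp add: V_def V'_def inner_commute)
qed

lemma gauss_d1:
  fixes C k A B V r :: real
  shows "((\<lambda>r. C * exp (- (k * (A + 2*r*B + r^2*V)))) has_real_derivative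
           (C * exp (- (k * (A + 2*r*B + r^2*V))) * (- (k * (2*B + 2*r*V))))) (at r)"
  by (auto intro!: derivative_eq_intros simp: algebra_simps power2_eq_square)

lemma gauss_d2:
  fixes C k A B V :: real
  shows "((\<lambda>r. C * exp (- (k * (A + 2*r*B + r^2*V))) * (- (k * (2*B + 2*r*V)))) has_real_derivative
           (C * exp (- (k * A)) * (4 * k^2 * B^2 - 2 * k * V))) (at 0)"
  by (auto intro!: derivative_eq_intros simp: algebra_simps power2_eq_square)

lemma time_d:
  fixes a X L t0 :: real
  assumes "0 < t0" "0 < L"
  shows "((\<lambda>s. s powr (- a) * exp (- X / (4 * L * s))) has_real_derivative
           (t0 powr (- a) * exp (- X / (4 * L * t0)) * (X / (4 * L * t0^2) - a / t0))) (at t0)"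
proof -
  have p: "t0 powr (- a - 1) = t0 powr (- a) / t0" using assms by (simp add: powr_diff)
  show ?thesis
    using assms
    by (auto intro!: derivative_eq_intros simp: p field_simps power2_eq_square)
qed

lemma Phi_pos: "0 < t \<Longrightarrow> Phi lam Lam (x::real^'n, t) =
   t powr (- (real CARD('n) * lam / (2 * Lam))) * exp (- (norm x)\<^sup>2 / (4 * Lam * t))"
  by (simp add: Phi_def)

lemma Phi_nonpos: "t \<le> 0 \<Longrightarrow> Phi lam Lam (x::real^'n, t) = 0"
  by (simp add: Phi_def)

lemma Phi_nonneg: "0 \<le> Phi lam Lam (z::(real^'n) \<times> real)"
  by (cases z) (simp add: Phi_def)

lemma Phi_scale:
  assumes k: "0 < k" and L: "0 < Lam"
  shows "Phi lam Lam (k *\<^sub>R (x::real^'n), k\<^sup>2 * t) = k powr (- (real CARD('n) * lam / Lam)) * Phi lam Lam (x, t)"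
proof (cases "0 < t")
  case False
  then have "\<not> 0 < k\<^sup>2 * t" using k by (simp add: zero_less_mult_iff)
  then show ?thesis using False by (simp add: Phi_def)
next
  case True
  define a where "a = real CARD('n) * lam / (2 * Lam)"
  have kt: "0 < k\<^sup>2 * t" using k True by simp
  have "(k\<^sup>2 * t) powr (- a) = (k\<^sup>2) powr (- a) * t powr (- a)"
    using k True by (simp add: powr_mult)
  also have "(k\<^sup>2) powr (- a) = k powr (- (real CARD('n) * lam / Lam))"
  proof -
    have "(k\<^sup>2) powr (- a) = (k powr 2) powr (- a)" using k by (simp add: powr_realpow)
    also have "\<dots> = k powr (2 * (- a))" by (simp add: powr_powr)
    also have "2 * (- a) = - (real CARD('n) * lam / Lam)" using L by (simp add: a_def)
    finally show ?thesis .
  qed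
  finally have p: "(k\<^sup>2 * t) powr (- a) = k powr (- (real CARD('n) * lam / Lam)) * t powr (- a)" .
  have e: "- (norm (k *\<^sub>R x))\<^sup>2 / (4 * Lam * (k\<^sup>2 * t)) = - (norm x)\<^sup>2 / (4 * Lam * t)"
    using k by (simp add: power_mult_distrib)
  show ?thesis
    unfolding Phi_pos[OF kt] Phi_pos[OF True] a_def[symmetric] p e by (simp only: mult.assoc)
qed

lemma Phi_lsc:
  assumes L: "0 < Lam"
  shows "lsc_at (Phi lam Lam :: (real^'n) \<times> real \<Rightarrow> real) z"
  unfolding lsc_at_def
proof (intro allI impI)
  fix c assume c: "c < Phi lam Lam z"
  obtain x t where z: "z = (x, t)" by (cases z)
  show "\<forall>\<^sub>F w in at z. c < Phi lam Lam w"
  proof (cases "0 < t")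
    case False
    then have "c < 0" using c z Phi_nonpos[of t lam Lam x] by simp
    then have "\<forall>w. c < Phi lam Lam w" using Phi_nonneg[of lam Lam] by (metis less_le_trans)
    then show ?thesis by (intro always_eventually)
  next
    case True
    define a where "a = real CARD('n) * lam / (2 * Lam)"
    define F where "F w = snd w powr (- a) * exp (- (norm (fst w))\<^sup>2 / (4 * Lam * snd w))" for w :: "(real^'n) \<times> real"
    have cF: "isCont F z" unfolding F_def using True z L
      by (intro continuous_intros) auto
    have ev: "eventually (\<lambda>w. F w = Phi lam Lam w) (nhds z)"
    proof -
      have "open {w :: (real^'n) \<times> real. 0 < snd w}" by (intro open_Collect_less continuous_intros)
      moreover have "z \<in> {w. 0 < snd w}" using True z by simp
      ultimately have "eventually (\<lambda>w. w \<in> {w. 0 < snd w}) (nhds z)" by (rule eventually_nhds_in_open)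
      then show ?thesis
      proof (rule eventually_mono)
        fix w :: "(real^'n) \<times> real" assume "w \<in> {w. 0 < snd w}"
        then show "F w = Phi lam Lam w" unfolding F_def a_def by (cases w) (simp add: Phi_pos)
      qed
    qed
    have "F z = Phi lam Lam z" using ev by (rule eventually_nhds_x_imp_x)
    then have "(F \<longlongrightarrow> Phi lam Lam z) (at z)" using cF by (simp add: isCont_def)
    moreover have "eventually (\<lambda>w. F w = Phi lam Lam w) (at z)"
      using ev by (simp add: eventually_at_filter eventually_mono)
    ultimately have "(Phi lam Lam \<longlongrightarrow> Phi lam Lam z) (at z)" by (rule Lim_transform_eventually)
    then show ?thesis using c by (rule order_tendstoD(1))
  qed
qed

lemma norm_line: "(norm (x0 + r *\<^sub>R v))\<^sup>2 = x0 \<bullet> x0 + 2 * r * (x0 \<bullet> v) + r\<^sup>2 * (v \<bullet> v)"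
proof -
  have "(norm (x0 + r *\<^sub>R v))\<^sup>2 = (x0 + r *\<^sub>R v) \<bullet> (x0 + r *\<^sub>R v)" by (simp add: power2_norm_eq_inner)
  also have "\<dots> = x0 \<bullet> x0 + 2 * r * (x0 \<bullet> v) + r\<^sup>2 * (v \<bullet> v)"
    by (simp add: inner_add_left inner_add_right inner_commute power2_eq_square algebra_simps)
  finally show ?thesis .
qed

lemma touch:
  fixes phi :: "(real^'n) \<times> real \<Rightarrow> real"
  assumes lam: "0 < lam" "lam \<le> Lam" and C: "C21_test phi Dx Dxx Dt U" and z0: "(x0, t0) \<in> U"
    and mn: "\<forall>z\<in>U. Phi lam Lam z - phi z \<ge> Phi lam Lam (x0, t0) - phi (x0, t0)"
  shows "Dt (x0, t0) - pucci_max lam Lam (Dxx (x0, t0)) \<ge> 0"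
proof -
  have L: "0 < Lam" using lam by linarith
  have oU: "open U" using C unfolding C21_test_def by blast
  obtain \<epsilon> where eps: "0 < \<epsilon>" "ball (x0, t0) \<epsilon> \<subseteq> U" using oU z0 open_contains_ball by blast
  have inUs: "(x0 + r *\<^sub>R v, t0) \<in> U" if "\<bar>r\<bar> < \<epsilon> / (norm v + 1)" for r v
  proof -
    have nv: "0 < norm v + 1" using norm_ge_zero[of v] by linarith
    have "\<bar>r\<bar> * norm v \<le> \<bar>r\<bar> * (norm v + 1)" by (simp add: mult_left_mono)
    also have "\<dots> < \<epsilon>" using that nv by (simp add: pos_less_divide_eq)
    finally have "dist (x0, t0) (x0 + r *\<^sub>R v, t0) < \<epsilon>" by (simp add: dist_Pair_Pair dist_norm)
    then show ?thesis using eps(2) by auto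
  qed
  have dpos: "0 < \<epsilon> / (norm v + 1)" for v :: "real^'n"
    using eps(1) norm_ge_zero[of v] by (simp add: add_nonneg_pos)
  have inUt: "(x0, s) \<in> U" if "\<bar>t0 - s\<bar> < \<epsilon>" for s
  proof -
    have "dist (x0, t0) (x0, s) < \<epsilon>" using that by (simp add: dist_Pair_Pair dist_real_def)
    then show ?thesis using eps(2) by auto
  qed
  have sym: "symmetric_mat (Dxx (x0, t0))" by (rule schwarz[OF C z0])
  define M where "M = Dxx (x0, t0)"
  show ?thesis
  proof (cases "0 < t0")
    case True
    define a where "a = real CARD('n) * lam / (2 * Lam)"
    define k where "k = 1 / (4 * Lam * t0)"
    define C0 where "C0 = t0 powr (- a)"
    define E where "E = exp (- (k * (x0 \<bullet> x0)))"
    define P0 where "P0 = C0 * E"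
    have k0: "0 < k" using L True by (simp add: k_def)
    have P0pos: "0 \<le> P0" by (simp add: P0_def C0_def E_def)
    have Gline: "Phi lam Lam (x0 + r *\<^sub>R v, t0) = C0 * exp (- (k * (x0 \<bullet> x0 + 2*r*(x0 \<bullet> v) + r^2*(v \<bullet> v))))" for r v
    proof -
      have aux: "- Q / (4 * Lam * t0) = - (k * Q)" for Q :: real by (simp add: k_def)
      show ?thesis unfolding Phi_pos[OF True] norm_line aux C0_def a_def ..
    qed
    have Phi0: "Phi lam Lam (x0, t0) = P0"
      using Gline[of 0 0] by (simp add: P0_def E_def)
    have bnd: "\<forall>v. v \<bullet> (M *v v) \<le> (4 * k^2 * P0) * (x0 \<bullet> v)^2 - (2 * k * P0) * (v \<bullet> v)"
    proof
      fix v :: "real^'n"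
      define d where "d = \<epsilon> / (norm v + 1)"
      define g where "g r = C0 * exp (- (k * (x0 \<bullet> x0 + 2*r*(x0 \<bullet> v) + r^2*(v \<bullet> v)))) - phi (x0 + r *\<^sub>R v, t0)" for r
      define g' where "g' r = C0 * exp (- (k * (x0 \<bullet> x0 + 2*r*(x0 \<bullet> v) + r^2*(v \<bullet> v)))) * (- (k * (2*(x0 \<bullet> v) + 2*r*(v \<bullet> v))))
          - Dx (x0 + r *\<^sub>R v, t0) \<bullet> v" for r
      have "0 \<le> C0 * exp (- (k * (x0 \<bullet> x0))) * (4 * k^2 * (x0 \<bullet> v)^2 - 2 * k * (v \<bullet> v)) - (M *v v) \<bullet> v"
      proof (rule second_order_min)
        show "0 < d" unfolding d_def by (rule dpos)
        fix r :: real assume r: "\<bar>r\<bar> < d"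
        have ru: "(x0 + r *\<^sub>R v, t0) \<in> U" using inUs r d_def by blast
        show "(g has_real_derivative g' r) (at r)" unfolding g_def g'_def
          by (intro DERIV_diff gauss_d1 line_deriv_phi[OF C ru])
        have "g r = Phi lam Lam (x0 + r *\<^sub>R v, t0) - phi (x0 + r *\<^sub>R v, t0)" unfolding g_def Gline ..
        moreover have "g 0 = Phi lam Lam (x0, t0) - phi (x0, t0)" unfolding g_def using Gline[of 0 v] by simp
        ultimately show "g 0 \<le> g r" using mn ru by auto
      next
        have u0: "(x0 + 0 *\<^sub>R v, t0) \<in> U" using z0 by simp
        have "((\<lambda>r. Dx (x0 + r *\<^sub>R v, t0) \<bullet> v) has_real_derivative (Dxx (x0 + 0 *\<^sub>R v, t0) *v v) \<bullet> v) (at 0)"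
          by (rule line_deriv_Dx[OF C u0])
        then have "((\<lambda>r. Dx (x0 + r *\<^sub>R v, t0) \<bullet> v) has_real_derivative (M *v v) \<bullet> v) (at 0)"
          by (simp add: M_def)
        then show "(g' has_real_derivative C0 * exp (- (k * (x0 \<bullet> x0))) * (4 * k^2 * (x0 \<bullet> v)^2 - 2 * k * (v \<bullet> v)) - (M *v v) \<bullet> v) (at 0)"
          unfolding g'_def by (intro DERIV_diff gauss_d2)
      qed
      then show "v \<bullet> (M *v v) \<le> (4 * k^2 * P0) * (x0 \<bullet> v)^2 - (2 * k * P0) * (v \<bullet> v)"
        by (simp add: P0_def E_def inner_commute algebra_simps)
    qed
    have pb: "pucci_max lam Lam M \<le> Lam * (4 * k^2 * P0) * (x0 \<bullet> x0) - lam * (2 * k * P0) * real CARD('n)"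
      by (rule pucci_bound[OF sym[folded M_def] lam _ _ bnd]) (use k0 P0pos in auto)
    define X where "X = (norm x0)\<^sup>2"
    have XX: "X = x0 \<bullet> x0" by (simp add: X_def power2_norm_eq_inner)
    have eE: "exp (- X / (4 * Lam * t0)) = E" unfolding E_def XX k_def by (simp add: divide_minus_left)
    define T' where "T' = P0 * (X / (4 * Lam * t0^2) - a / t0)"
    have dT: "((\<lambda>s. s powr (- a) * exp (- X / (4 * Lam * s))) has_real_derivative T') (at t0)"
      using time_d[OF True L, of a X] unfolding T'_def P0_def C0_def eE .
    have dPhi: "((\<lambda>s. Phi lam Lam (x0, s)) has_real_derivative T') (at t0)"
    proof (rule has_field_derivative_transform_within_open[OF dT _ _])
      show "open {0::real<..}" by simp
      show "t0 \<in> {0<..}" using True by simp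
      fix s :: real assume "s \<in> {0<..}"
      then show "s powr (- a) * exp (- X / (4 * Lam * s)) = Phi lam Lam (x0, s)"
        by (simp add: Phi_pos a_def X_def)
    qed
    have "((\<lambda>s. Phi lam Lam (x0, s) - phi (x0, s)) has_real_derivative T' - Dt (x0, t0)) (at t0)"
      by (intro DERIV_diff dPhi C21_D(3)[OF C z0])
    moreover have "\<forall>s. \<bar>t0 - s\<bar> < \<epsilon> \<longrightarrow> Phi lam Lam (x0, t0) - phi (x0, t0) \<le> Phi lam Lam (x0, s) - phi (x0, s)"
      using mn inUt by auto
    ultimately have "T' - Dt (x0, t0) = 0" by (rule DERIV_local_min[OF _ eps(1)])
    then have Dt: "Dt (x0, t0) = T'" by simp
    have "Lam * (4 * k^2 * P0) * (x0 \<bullet> x0) - lam * (2 * k * P0) * real CARD('n) = T'"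
      unfolding T'_def XX[symmetric] k_def a_def using L True
      by (simp add: field_simps power2_eq_square)
    then show ?thesis using pb Dt unfolding M_def by simp
  next
    case False
    have Phi0: "Phi lam Lam (y, t0) = 0" for y using False by (simp add: Phi_nonpos)
    have bnd: "\<forall>v. v \<bullet> (M *v v) \<le> 0 * (x0 \<bullet> v)^2 - 0 * (v \<bullet> v)"
    proof
      fix v :: "real^'n"
      define d where "d = \<epsilon> / (norm v + 1)"
      define g where "g r = - phi (x0 + r *\<^sub>R v, t0)" for r
      define g' where "g' r = - (Dx (x0 + r *\<^sub>R v, t0) \<bullet> v)" for r
      have "0 \<le> - ((M *v v) \<bullet> v)"
      proof (rule second_order_min)
        show "0 < d" unfolding d_def by (rule dpos)
        fix r :: real assume r: "\<bar>r\<bar> < d"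
        have ru: "(x0 + r *\<^sub>R v, t0) \<in> U" using inUs r d_def by blast
        show "(g has_real_derivative g' r) (at r)" unfolding g_def g'_def
          by (intro DERIV_minus line_deriv_phi[OF C ru])
        have "Phi lam Lam (x0, t0) - phi (x0, t0) \<le> Phi lam Lam (x0 + r *\<^sub>R v, t0) - phi (x0 + r *\<^sub>R v, t0)"
          using mn ru by blast
        then show "g 0 \<le> g r" unfolding g_def using Phi0[of x0] Phi0[of "x0 + r *\<^sub>R v"] by simp
      next
        have u0: "(x0 + 0 *\<^sub>R v, t0) \<in> U" using z0 by simp
        have "((\<lambda>r. Dx (x0 + r *\<^sub>R v, t0) \<bullet> v) has_real_derivative (Dxx (x0 + 0 *\<^sub>R v, t0) *v v) \<bullet> v) (at 0)"
          by (rule line_deriv_Dx[OF C u0])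
        then have "((\<lambda>r. Dx (x0 + r *\<^sub>R v, t0) \<bullet> v) has_real_derivative (M *v v) \<bullet> v) (at 0)"
          by (simp add: M_def)
        then show "(g' has_real_derivative - ((M *v v) \<bullet> v)) (at 0)"
          unfolding g'_def by (rule DERIV_minus)
      qed
      then show "v \<bullet> (M *v v) \<le> 0 * (x0 \<bullet> v)^2 - 0 * (v \<bullet> v)"
        by (simp add: inner_commute)
    qed
    have pb: "pucci_max lam Lam M \<le> Lam * 0 * (x0 \<bullet> x0) - lam * 0 * real CARD('n)"
      by (rule pucci_bound[OF sym[folded M_def] lam _ _ bnd]) auto
    have "0 \<le> Dt (x0, t0)"
    proof (rule deriv_left_nonneg[OF C21_D(3)[OF C z0] eps(1)])
      fix s assume s: "t0 - \<epsilon> < s" "s < t0"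
      then have "(x0, s) \<in> U" using inUt by auto
      then have "Phi lam Lam (x0, s) - phi (x0, s) \<ge> Phi lam Lam (x0, t0) - phi (x0, t0)" using mn by blast
      moreover have "Phi lam Lam (x0, s) = 0" using s False by (simp add: Phi_nonpos)
      ultimately show "phi (x0, s) \<le> phi (x0, t0)" using Phi0[of x0] by simp
    qed
    then show ?thesis using pb unfolding M_def by simp
  qed
qed

theorem lemma7p1:
  fixes lam Lam :: real
  assumes "0 < lam" and "lam \<le> Lam"
  shows "(\<forall>k>0. \<forall>(x::real^'n) t.
            Phi lam Lam (k *\<^sub>R x, k\<^sup>2 * t)
              = k powr (- (real CARD('n) * lam / Lam)) * Phi lam Lam (x, t))
       \<and> visc_supersol lam Lam (Phi lam Lam :: (real^'n) \<times> real \<Rightarrow> real) (UNIV - {(0, 0)})"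
proof -
  have L: "0 < Lam" using assms by linarith
  have A: "\<forall>k>0. \<forall>(x::real^'n) t.
            Phi lam Lam (k *\<^sub>R x, k\<^sup>2 * t)
              = k powr (- (real CARD('n) * lam / Lam)) * Phi lam Lam (x, t)"
    using Phi_scale[OF _ L] by blast
  have B: "visc_supersol lam Lam (Phi lam Lam :: (real^'n) \<times> real \<Rightarrow> real) (UNIV - {(0, 0)})"
    unfolding visc_supersol_def
  proof (intro conjI ballI allI impI)
    fix z :: "(real^'n) \<times> real"
    show "lsc_at (Phi lam Lam) z" by (rule Phi_lsc[OF L])
  next
    fix z0 :: "(real^'n) \<times> real" and phi Dx Dxx Dt U
    assume H: "z0 \<in> U \<and> U \<subseteq> UNIV - {(0, 0)} \<and> C21_test phi Dx Dxx Dt U \<and>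
      (\<forall>z\<in>U. Phi lam Lam z0 - phi z0 \<le> Phi lam Lam z - phi z)"
    obtain x0 t0 where z: "z0 = (x0, t0)" by (cases z0)
    have C: "C21_test phi Dx Dxx Dt U" and zU: "(x0, t0) \<in> U"
      and mn: "\<forall>z\<in>U. Phi lam Lam z - phi z \<ge> Phi lam Lam (x0, t0) - phi (x0, t0)"
      using H z by auto
    show "0 \<le> Dt z0 - pucci_max lam Lam (Dxx z0)"
      using touch[OF assms C zU mn] z by simp
  qed
  show ?thesis using A B by blast
qed

end
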